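(* If $G$ is a connected graph, then $D(G)\le \dim(G)+1$. Moreover, the bound is sharp (e.g. equality holds for every path $P_n$, $n\ge 2$).
   Context: All graphs are finite and simple. For a connected graph $G$ with shortest-path distance $d_G$, a set $S\subseteq V(G)$ is resolving if for any two distinct vertices $x,y$ there is $s\in S$ with $d_G(x,s)\neq d_G(y,s)$; the metric dimension $\dim(G)$ is the minimum size of a resolving set. A distinguishing coloring of a graph $G$ is a (not necessarily proper) vertex coloring such that the only automorphism of $G$ mapping every vertex to a vertex of the same color is the identity; the distinguishing number $D(G)$ is the minimum number of colors in a distinguishing coloring of $G$. *)

theory Defs
  imports Main
begin

definition simple_graph :: "'a set \<Rightarrow> ('a \<Rightarrow> 'a \<Rightarrow> bool) \<Rightarrow> bool" where
  "simple_graph V E \<longleftrightarrow> finite V \<and> (\<forall>x y. E x y \<longrightarrow> x \<in> V \<and> y \<in> V)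
     \<and> (\<forall>x y. E x y \<longrightarrow> E y x) \<and> (\<forall>x. \<not> E x x)"

definition is_walk :: "'a set \<Rightarrow> ('a \<Rightarrow> 'a \<Rightarrow> bool) \<Rightarrow> 'a list \<Rightarrow> bool" where
  "is_walk V E xs \<longleftrightarrow> xs \<noteq> [] \<and> set xs \<subseteq> V
     \<and> (\<forall>i. Suc i < length xs \<longrightarrow> E (xs ! i) (xs ! Suc i))"

definition connected_graph :: "'a set \<Rightarrow> ('a \<Rightarrow> 'a \<Rightarrow> bool) \<Rightarrow> bool" where
  "connected_graph V E \<longleftrightarrow> simple_graph V E \<and> V \<noteq> {} \<and>
     (\<forall>x\<in>V. \<forall>y\<in>V. \<exists>xs. is_walk V E xs \<and> hd xs = x \<and> last xs = y)"

definition gdist :: "'a set \<Rightarrow> ('a \<Rightarrow> 'a \<Rightarrow> bool) \<Rightarrow> 'a \<Rightarrow> 'a \<Rightarrow> nat" where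
  "gdist V E x y = (LEAST n. \<exists>xs. is_walk V E xs \<and> hd xs = x \<and> last xs = y
                                 \<and> length xs = Suc n)"

definition resolving :: "'a set \<Rightarrow> ('a \<Rightarrow> 'a \<Rightarrow> bool) \<Rightarrow> 'a set \<Rightarrow> bool" where
  "resolving V E S \<longleftrightarrow> S \<subseteq> V \<and>
     (\<forall>x\<in>V. \<forall>y\<in>V. x \<noteq> y \<longrightarrow> (\<exists>s\<in>S. gdist V E x s \<noteq> gdist V E y s))"

definition metric_dim :: "'a set \<Rightarrow> ('a \<Rightarrow> 'a \<Rightarrow> bool) \<Rightarrow> nat" where
  "metric_dim V E = (LEAST k. \<exists>S. resolving V E S \<and> card S = k)"

definition automorphism :: "'a set \<Rightarrow> ('a \<Rightarrow> 'a \<Rightarrow> bool) \<Rightarrow> ('a \<Rightarrow> 'a) \<Rightarrow> bool" where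
  "automorphism V E f \<longleftrightarrow> bij_betw f V V \<and> (\<forall>x\<in>V. \<forall>y\<in>V. E x y \<longleftrightarrow> E (f x) (f y))"

definition distinguishing :: "'a set \<Rightarrow> ('a \<Rightarrow> 'a \<Rightarrow> bool) \<Rightarrow> ('a \<Rightarrow> nat) \<Rightarrow> bool" where
  "distinguishing V E c \<longleftrightarrow>
     (\<forall>f. automorphism V E f \<and> (\<forall>v\<in>V. c (f v) = c v) \<longrightarrow> (\<forall>v\<in>V. f v = v))"

definition distinguishing_number :: "'a set \<Rightarrow> ('a \<Rightarrow> 'a \<Rightarrow> bool) \<Rightarrow> nat" where
  "distinguishing_number V E =
     (LEAST k. \<exists>c. (\<forall>v\<in>V. c v < k) \<and> distinguishing V E c)"

definition path_V :: "nat \<Rightarrow> nat set" where "path_V n = {..<n}"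
definition path_E :: "nat \<Rightarrow> nat \<Rightarrow> nat \<Rightarrow> bool" where
  "path_E n i j \<longleftrightarrow> i < n \<and> j < n \<and> (j = Suc i \<or> i = Suc j)"

end

theory Submission
  imports Defs
begin

lemma auto_walk:
  assumes "automorphism V E f" "is_walk V E xs"
  shows "is_walk V E (map f xs)"
proof -
  have fV: "\<And>x. x \<in> V \<Longrightarrow> f x \<in> V" using assms(1) unfolding automorphism_def bij_betw_def by auto
  have EV: "\<And>x y. x \<in> V \<Longrightarrow> y \<in> V \<Longrightarrow> E x y \<Longrightarrow> E (f x) (f y)" using assms(1) unfolding automorphism_def by auto
  show ?thesis using assms(2) unfolding is_walk_def
  proof (intro conjI allI impI)
    fix i assume w: "xs \<noteq> [] \<and> set xs \<subseteq> V \<and> (\<forall>i. Suc i < length xs \<longrightarrow> E (xs ! i) (xs ! Suc i))"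
      and i: "Suc i < length (map f xs)"
    then have "xs ! i \<in> V" "xs ! Suc i \<in> V" using nth_mem[of i xs] nth_mem[of "Suc i" xs] by auto
    then show "E (map f xs ! i) (map f xs ! Suc i)" using w i EV by auto
  qed (use fV in auto)
qed

lemma auto_inv:
  assumes "automorphism V E f"
  shows "automorphism V E (inv_into V f)"
proof -
  have b: "bij_betw f V V" using assms unfolding automorphism_def by auto
  have bi: "bij_betw (inv_into V f) V V" using bij_betw_inv_into[OF b] .
  have "\<forall>x\<in>V. \<forall>y\<in>V. E x y \<longleftrightarrow> E (inv_into V f x) (inv_into V f y)"
  proof (intro ballI)
    fix x y assume x: "x \<in> V" and y: "y \<in> V"
    have gx: "inv_into V f x \<in> V" "inv_into V f y \<in> V" using bi x y bij_betwE by blast+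
    have "f (inv_into V f x) = x" "f (inv_into V f y) = y"
      using b x y by (meson bij_betw_inv_into_right)+
    then show "E x y \<longleftrightarrow> E (inv_into V f x) (inv_into V f y)"
      using assms gx unfolding automorphism_def by metis
  qed
  then show ?thesis using bi unfolding automorphism_def by auto
qed

lemma auto_gdist:
  assumes "automorphism V E f" "x \<in> V" "y \<in> V"
  shows "gdist V E (f x) (f y) = gdist V E x y"
proof -
  have b: "bij_betw f V V" using assms unfolding automorphism_def by auto
  let ?g = "inv_into V f"
  have gf: "\<And>z. z \<in> V \<Longrightarrow> ?g (f z) = z" using b by (meson bij_betw_inv_into_left)
  have "(\<lambda>n. \<exists>xs. is_walk V E xs \<and> hd xs = f x \<and> last xs = f y \<and> length xs = Suc n)
      = (\<lambda>n. \<exists>xs. is_walk V E xs \<and> hd xs = x \<and> last xs = y \<and> length xs = Suc n)"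
  proof (intro ext iffI)
    fix n assume "\<exists>xs. is_walk V E xs \<and> hd xs = f x \<and> last xs = f y \<and> length xs = Suc n"
    then obtain xs where xs: "is_walk V E xs" "hd xs = f x" "last xs = f y" "length xs = Suc n" by blast
    have "is_walk V E (map ?g xs)" using auto_walk[OF auto_inv[OF assms(1)] xs(1)] .
    moreover have "xs \<noteq> []" using xs(1) unfolding is_walk_def by auto
    ultimately show "\<exists>xs. is_walk V E xs \<and> hd xs = x \<and> last xs = y \<and> length xs = Suc n"
      using xs gf assms by (intro exI[of _ "map ?g xs"]) (auto simp: hd_map last_map)
  next
    fix n assume "\<exists>xs. is_walk V E xs \<and> hd xs = x \<and> last xs = y \<and> length xs = Suc n"
    then obtain xs where xs: "is_walk V E xs" "hd xs = x" "last xs = y" "length xs = Suc n" by blast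
    have "is_walk V E (map f xs)" using auto_walk[OF assms(1) xs(1)] .
    moreover have "xs \<noteq> []" using xs(1) unfolding is_walk_def by auto
    ultimately show "\<exists>xs. is_walk V E xs \<and> hd xs = f x \<and> last xs = f y \<and> length xs = Suc n"
      using xs by (intro exI[of _ "map f xs"]) (auto simp: hd_map last_map)
  qed
  then show ?thesis unfolding gdist_def by simp
qed

lemma gdist_self:
  assumes "x \<in> V" shows "gdist V E x x = 0"
  unfolding gdist_def
  by (rule Least_equality, rule exI[of _ "[x]"]) (use assms in \<open>auto simp: is_walk_def\<close>)

lemma gdist_zero:
  assumes "connected_graph V E" "x \<in> V" "y \<in> V" "gdist V E y x = 0"
  shows "y = x"
proof -
  obtain xs where xs: "is_walk V E xs" "hd xs = y" "last xs = x"
    using assms unfolding connected_graph_def by blast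
  have "length xs = Suc (length xs - 1)" using xs(1) unfolding is_walk_def by auto
  then have "\<exists>n xs. is_walk V E xs \<and> hd xs = y \<and> last xs = x \<and> length xs = Suc n" using xs by blast
  from LeastI_ex[OF this] assms(4) obtain ys where
    "is_walk V E ys" "hd ys = y" "last ys = x" "length ys = Suc 0" unfolding gdist_def by auto
  then show ?thesis by (cases ys) auto
qed

lemma part1:
  assumes c: "connected_graph V E"
  shows "distinguishing_number V E \<le> metric_dim V E + 1"
proof -
  have fin: "finite V" using c unfolding connected_graph_def simple_graph_def by auto
  have "resolving V E V" unfolding resolving_def
  proof (intro conjI ballI impI)
    fix x y assume "x \<in> V" "y \<in> V" "x \<noteq> y"
    then show "\<exists>s\<in>V. gdist V E x s \<noteq> gdist V E y s"
      using gdist_self[of x V E] gdist_zero[OF c, of x y] by (intro bexI[of _ x]) auto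
  qed simp
  then have "\<exists>k S. resolving V E S \<and> card S = k" by blast
  from LeastI_ex[OF this] obtain S where S: "resolving V E S" "card S = metric_dim V E"
    unfolding metric_dim_def by blast
  have SV: "S \<subseteq> V" using S unfolding resolving_def by auto
  then have finS: "finite S" using fin finite_subset by auto
  obtain h where h: "bij_betw h S {0..<card S}" using ex_bij_betw_finite_nat[OF finS] by blast
  define col where "col v = (if v \<in> S then h v + 1 else 0)" for v
  have lt: "\<forall>v\<in>V. col v < metric_dim V E + 1"
    using h S(2) unfolding col_def bij_betw_def by auto
  have dist: "distinguishing V E col" unfolding distinguishing_def
  proof (intro allI impI ballI)
    fix f v assume fa: "automorphism V E f \<and> (\<forall>v\<in>V. col (f v) = col v)" and v: "v \<in> V"
    have fV: "\<And>x. x \<in> V \<Longrightarrow> f x \<in> V" using fa unfolding automorphism_def bij_betw_def by auto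
    have fixS: "f s = s" if s: "s \<in> S" for s
    proof -
      have sV: "s \<in> V" using s SV by auto
      have "col (f s) = h s + 1" using fa sV s unfolding col_def by auto
      then have "f s \<in> S" "h (f s) = h s" unfolding col_def by (auto split: if_splits)
      then show ?thesis using h s unfolding bij_betw_def inj_on_def by auto
    qed
    show "f v = v"
    proof (rule ccontr)
      assume "f v \<noteq> v"
      then obtain s where s: "s \<in> S" "gdist V E (f v) s \<noteq> gdist V E v s"
        using S(1) fV[OF v] v unfolding resolving_def by blast
      have "gdist V E (f v) (f s) = gdist V E v s" using auto_gdist[of V E f v s] fa v s SV by auto
      then show False using s fixS by auto
    qed
  qed
  show ?thesis unfolding distinguishing_number_def
    by (rule Least_le) (use lt dist in blast)
qed

lemma path_simple: "simple_graph (path_V n) (path_E n)"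
  unfolding simple_graph_def path_V_def path_E_def by auto

lemma walk_up:
  assumes "x \<le> y" "y < n"
  shows "is_walk (path_V n) (path_E n) [x..<Suc y]"
  using assms unfolding is_walk_def path_V_def path_E_def by (auto simp del: upt_Suc simp: nth_upt)

lemma walk_down:
  assumes "x \<le> y" "y < n"
  shows "is_walk (path_V n) (path_E n) (rev [x..<Suc y])"
  using assms unfolding is_walk_def path_V_def path_E_def
  by (auto simp del: upt_Suc simp: rev_nth nth_upt)

lemma path_conn:
  assumes "n \<ge> 2" shows "connected_graph (path_V n) (path_E n)"
  unfolding connected_graph_def
proof (intro conjI ballI)
  have "0 \<in> path_V n" using assms unfolding path_V_def by auto
  then show "path_V n \<noteq> {}" by auto
next
  fix x y assume x: "x \<in> path_V n" and y: "y \<in> path_V n"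
  show "\<exists>xs. is_walk (path_V n) (path_E n) xs \<and> hd xs = x \<and> last xs = y"
  proof (cases "x \<le> y")
    case True
    then show ?thesis using walk_up[of x y n] y
      by (intro exI[of _ "[x..<Suc y]"]) (auto simp del: upt_Suc simp: path_V_def hd_upt)
  next
    case False
    then show ?thesis using walk_down[of y x n] x
      by (intro exI[of _ "rev [y..<Suc x]"]) (auto simp del: upt_Suc simp: path_V_def hd_rev last_rev hd_upt)
  qed
qed (rule path_simple)

lemma walk_bound:
  assumes "is_walk (path_V n) (path_E n) xs"
  shows "k < length xs \<Longrightarrow> xs ! 0 \<le> xs ! k + k"
proof (induction k)
  case (Suc k)
  then have "path_E n (xs ! k) (xs ! Suc k)" using assms unfolding is_walk_def by auto
  then show ?case using Suc unfolding path_E_def by auto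
qed simp

lemma path_gdist0:
  assumes "i < n" shows "gdist (path_V n) (path_E n) i 0 = i"
  unfolding gdist_def
proof (rule Least_equality)
  show "\<exists>xs. is_walk (path_V n) (path_E n) xs \<and> hd xs = i \<and> last xs = 0 \<and> length xs = Suc i"
    using walk_down[of 0 i n] assms
    by (intro exI[of _ "rev [0..<Suc i]"]) (auto simp: hd_rev last_rev)
next
  fix m assume "\<exists>xs. is_walk (path_V n) (path_E n) xs \<and> hd xs = i \<and> last xs = 0 \<and> length xs = Suc m"
  then obtain xs where xs: "is_walk (path_V n) (path_E n) xs" "hd xs = i" "last xs = 0" "length xs = Suc m"
    by blast
  have "xs ! 0 \<le> xs ! m + m" using walk_bound[OF xs(1), of m] xs(4) by auto
  moreover have "xs ! 0 = i" using xs(2,4) by (cases xs) auto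
  moreover have "xs ! m = 0" using xs(3,4) last_conv_nth[of xs] by (cases xs) auto
  ultimately show "i \<le> m" by simp
qed

lemma path_dim:
  assumes "n \<ge> 2" shows "metric_dim (path_V n) (path_E n) = 1"
  unfolding metric_dim_def
proof (rule Least_equality)
  have "resolving (path_V n) (path_E n) {0}"
    unfolding resolving_def
  proof (intro conjI ballI impI)
    fix x y assume "x \<in> path_V n" "y \<in> path_V n" "x \<noteq> y"
    then show "\<exists>s\<in>{0}. gdist (path_V n) (path_E n) x s \<noteq> gdist (path_V n) (path_E n) y s"
      using path_gdist0[of x n] path_gdist0[of y n] by (auto simp: path_V_def)
  qed (use assms in \<open>auto simp: path_V_def\<close>)
  then show "\<exists>S. resolving (path_V n) (path_E n) S \<and> card S = 1" by (intro exI[of _ "{0}"]) auto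
next
  fix k assume "\<exists>S. resolving (path_V n) (path_E n) S \<and> card S = k"
  then obtain S where S: "resolving (path_V n) (path_E n) S" "card S = k" by blast
  have "S \<noteq> {}"
  proof
    assume "S = {}"
    moreover have "(0::nat) \<in> path_V n" "(1::nat) \<in> path_V n" using assms by (auto simp: path_V_def)
    ultimately show False using S(1) unfolding resolving_def by force
  qed
  moreover have "finite S" using S(1) unfolding resolving_def path_V_def using finite_subset by blast
  ultimately have "card S > 0" by (simp add: card_gt_0_iff)
  then show "1 \<le> k" using S(2) by simp
qed

lemma path_refl_auto:
  "automorphism (path_V n) (path_E n) (\<lambda>i. n - 1 - i)"
  unfolding automorphism_def
proof
  show "bij_betw (\<lambda>i. n - 1 - i) (path_V n) (path_V n)"
    unfolding bij_betw_def inj_on_def path_V_def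
  proof (intro conjI ballI impI)
    show "(\<lambda>i. n - 1 - i) ` {..<n} = {..<n}"
    proof (intro equalityI subsetI)
      fix x assume "x \<in> {..<n}"
      then have "x = n - 1 - (n - 1 - x)" "n - 1 - x \<in> {..<n}" by auto
      then show "x \<in> (\<lambda>i. n - 1 - i) ` {..<n}" by blast
    qed auto
  qed auto
next
  show "\<forall>x\<in>path_V n. \<forall>y\<in>path_V n. path_E n x y = path_E n (n - 1 - x) (n - 1 - y)"
    unfolding path_V_def path_E_def by (intro ballI) (simp, arith)
qed

lemma path_D:
  assumes "n \<ge> 2" shows "distinguishing_number (path_V n) (path_E n) = 2"
  unfolding distinguishing_number_def
proof (rule Least_equality)
  define col where "col v = (if v = 0 then 1 else (0::nat))" for v :: nat
  have "distinguishing (path_V n) (path_E n) col" unfolding distinguishing_def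
  proof (intro allI impI ballI)
    fix f v assume fa: "automorphism (path_V n) (path_E n) f \<and> (\<forall>v\<in>path_V n. col (f v) = col v)"
      and v: "v \<in> path_V n"
    have au: "automorphism (path_V n) (path_E n) f" and cc: "\<forall>v\<in>path_V n. col (f v) = col v"
      using fa by blast+
    have fV: "f v \<in> path_V n" using au v unfolding automorphism_def bij_betw_def by blast
    have z: "0 \<in> path_V n" using assms by (auto simp: path_V_def)
    have "col (f 0) = col 0" using cc z by blast
    then have f0: "f 0 = 0" unfolding col_def by (simp split: if_splits)
    have "gdist (path_V n) (path_E n) (f v) (f 0) = gdist (path_V n) (path_E n) v 0"
      by (rule auto_gdist[OF au v z])
    moreover have "gdist (path_V n) (path_E n) (f v) 0 = f v" using path_gdist0[of "f v" n] fV by (simp add: path_V_def)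
    moreover have "gdist (path_V n) (path_E n) v 0 = v" using path_gdist0[of v n] v by (simp add: path_V_def)
    ultimately show "f v = v" using f0 by simp
  qed
  then show "\<exists>c. (\<forall>v\<in>path_V n. c v < 2) \<and> distinguishing (path_V n) (path_E n) c"
    by (intro exI[of _ col]) (auto simp: col_def)
next
  fix k assume "\<exists>c. (\<forall>v\<in>path_V n. c v < k) \<and> distinguishing (path_V n) (path_E n) c"
  then obtain c where c: "\<forall>v\<in>path_V n. c v < k" "distinguishing (path_V n) (path_E n) c" by blast
  show "2 \<le> k"
  proof (rule ccontr)
    assume "\<not> 2 \<le> k"
    then have "\<forall>v\<in>path_V n. c v = 0" using c(1) by auto
    moreover have "(\<lambda>i. n - 1 - i) ` path_V n \<subseteq> path_V n" by (auto simp: path_V_def)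
    ultimately have "\<forall>v\<in>path_V n. c (n - 1 - v) = c v" by (auto simp: path_V_def)
    then have "\<forall>v\<in>path_V n. n - 1 - v = v"
      using c(2)[unfolded distinguishing_def, rule_format, of "\<lambda>i. n - 1 - i"] path_refl_auto[of n] by blast
    moreover have "0 \<in> path_V n" using assms by (auto simp: path_V_def)
    ultimately have "n - 1 - 0 = 0" by blast
    then show False using assms by simp
  qed
qed

theorem proposition3p1:
  shows "(\<forall>(V :: 'a set) E. connected_graph V E \<longrightarrow>
            distinguishing_number V E \<le> metric_dim V E + 1)
         \<and> (\<forall>n\<ge>2. connected_graph (path_V n) (path_E n) \<and>
            distinguishing_number (path_V n) (path_E n) = metric_dim (path_V n) (path_E n) + 1)"
proof (intro conjI allI impI)
  fix V :: "'a set" and E assume "connected_graph V E"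
  then show "distinguishing_number V E \<le> metric_dim V E + 1" by (rule part1)
next
  fix n :: nat assume "n \<ge> 2"
  then show "connected_graph (path_V n) (path_E n)" by (rule path_conn)
next
  fix n :: nat assume "n \<ge> 2"
  then show "distinguishing_number (path_V n) (path_E n) = metric_dim (path_V n) (path_E n) + 1"
    using path_D path_dim by simp
qed

end
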